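(* Let $H \subset L$ be a commutative field extension, let $\alpha \in L$ and set $M = H(\alpha)$. Then, for all positive integers $r,s \le \dim_H M$, we have $\mu_{H,M}(r,s) \le r+s-1$.
   Context: For $H$-subspaces $A,B$ of $M$, $\langle AB\rangle$ denotes the $H$-subspace of $M$ spanned by the product set $AB=\{ab \mid a\in A, b\in B\}$. For positive integers $r,s \le \dim_H M$, $\mu_{H,M}(r,s)$ is the minimum of $\dim_H \langle AB\rangle$ over all $H$-subspaces $A,B$ of $M$ with $\dim_H A = r$ and $\dim_H B = s$. *)

theory Defs
  imports "HOL-Algebra.Algebra"
begin

text \<open>The H-subspace of the ambient field L spanned by a set S: the smallest
  H-subspace (subalgebra in the sense of Embedded_Algebras) of L containing S.\<close>
definition hspan :: "('a, 'b) ring_scheme \<Rightarrow> 'a set \<Rightarrow> 'a set \<Rightarrow> 'a set" where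
  "hspan L H S = \<Inter> {V. subalgebra H V L \<and> S \<subseteq> V}"

definition hsubspace_dim :: "('a, 'b) ring_scheme \<Rightarrow> 'a set \<Rightarrow> 'a set \<Rightarrow> nat \<Rightarrow> 'a set \<Rightarrow> bool" where
  "hsubspace_dim L H M r A \<longleftrightarrow> subalgebra H A L \<and> A \<subseteq> M \<and> ring.dimension L r H A"

definition mu :: "('a, 'b) ring_scheme \<Rightarrow> 'a set \<Rightarrow> 'a set \<Rightarrow> nat \<Rightarrow> nat \<Rightarrow> nat" where
  "mu L H M r s = Inf {ring.dim L H (hspan L H (A <#>\<^bsub>L\<^esub> B)) | A B.
      hsubspace_dim L H M r A \<and> hsubspace_dim L H M s B}"

text \<open>r \<le> dim_H M, where dim_H M may be infinite.\<close>
definition le_hdim :: "('a, 'b) ring_scheme \<Rightarrow> 'a set \<Rightarrow> nat \<Rightarrow> 'a set \<Rightarrow> bool" where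
  "le_hdim L H r M \<longleftrightarrow> \<not> ring.finite_dimension L H M \<or> r \<le> ring.dim L H M"

end

theory Submission
  imports Defs
begin

lemma (in domain) transc_exp_base_independent:
  assumes "subfield K R" "x \<in> carrier R" "(transcendental over K) x"
  shows "independent K (exp_base x n)"
proof (induct n)
  case 0 show ?case by (simp add: exp_base_def)
next
  case (Suc n)
  have "x [^] n \<notin> Span K (exp_base x n)"
  proof
    assume "x [^] n \<in> Span K (exp_base x n)"
    then obtain a Ks
      where Ks: "a \<in> K - { \<zero> }" "set Ks \<subseteq> K" "length Ks = n" "combine (a # Ks) (exp_base x (Suc n)) = \<zero>"
      using Span_mem_imp_non_trivial_combine[OF assms(1) exp_base_closed[OF assms(2), of n]]
      by (auto simp add: exp_base_def)
    hence "eval (a # Ks) x = \<zero>"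
      using combine_eq_eval by (auto simp add: exp_base_def)
    moreover have "(a # Ks) \<in> carrier (K[X])"
      unfolding univ_poly_def polynomial_def using Ks(1-2) by auto
    moreover have "[] \<in> carrier (K[X])"
      unfolding univ_poly_def polynomial_def by auto
    moreover have "eval [] x = \<zero>" by simp
    ultimately have "a # Ks = []"
      using assms(3) unfolding over_def transcendental_def inj_on_def by metis
    thus False by simp
  qed
  thus ?case
    using independent.li_Cons assms(2) Suc by (auto simp add: exp_base_def)
qed

lemma (in domain) Span_exp_base_mult:
  assumes K: "subfield K R" and x: "x \<in> carrier R" and "0 < m" "0 < n"
    and a: "a \<in> Span K (exp_base x m)" and b: "b \<in> Span K (exp_base x n)"
  shows "a \<otimes> b \<in> Span K (exp_base x (m + n - 1))"
proof -
  have sr: "subring K R" using subfieldE(1)[OF K] .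
  obtain p where p: "p \<in> carrier (K[X])" "length p \<le> m" "a = eval p x"
    using a Span_eq_eval_img[OF K x] by auto
  obtain q where q: "q \<in> carrier (K[X])" "length q \<le> n" "b = eval q x"
    using b Span_eq_eval_img[OF K x] by auto
  have pK: "set p \<subseteq> carrier R" "set q \<subseteq> carrier R"
    using p(1) q(1) polynomial_in_carrier[OF sr] unfolding univ_poly_carrier[symmetric] by auto
  have ev: "a \<otimes> b = eval (poly_mult p q) x"
    using eval_poly_mult[OF pK x] p q by simp
  have pm: "poly_mult p q \<in> carrier (K[X])"
  proof -
    interpret UP: ring "K[X]" using univ_poly_is_ring[OF sr] .
    show ?thesis using UP.m_closed[OF p(1) q(1)] univ_poly_mult[of R K] by simp
  qed
  have deg: "degree (poly_mult p q) = (if p = [] \<or> q = [] then 0 else degree p + degree q)"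
    using poly_mult_degree_eq[OF sr] p(1) q(1) unfolding univ_poly_carrier[symmetric] by blast
  have "length (poly_mult p q) \<le> m + n - 1"
    using deg p(2) q(2) assms(3,4) by (cases "p = [] \<or> q = []") auto
  thus ?thesis
    using ev pm Span_eq_eval_img[OF K x] by auto
qed

lemma (in field) subfield_subalgebra:
  assumes "subfield H R" "subfield M R" "H \<subseteq> M"
  shows "subalgebra H M R"
proof -
  have "subgroup M (add_monoid R)"
    using subring.axioms(1)[OF subfieldE(1)[OF assms(2)]] unfolding additive_subgroup_def by simp
  moreover have "\<And>k v. k \<in> H \<Longrightarrow> v \<in> M \<Longrightarrow> k \<otimes> v \<in> M"
    using subringE(6)[OF subfieldE(1)[OF assms(2)]] assms(3) by blast
  ultimately show ?thesis unfolding subalgebra_def subalgebra_axioms_def by blast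
qed

lemma (in ring) pow_in_subring:
  assumes "subring M R" "x \<in> M" shows "x [^] (n::nat) \<in> M"
proof (induct n)
  case 0 show ?case using subringE(3)[OF assms(1)] by simp
next
  case (Suc n) thus ?case using subringE(6)[OF assms(1)] assms(2) by simp
qed

lemma (in ring) filter_base_len:
  assumes K: "subfield K R" and "set Us \<subseteq> carrier R"
  shows "\<exists>Vs. independent K Vs \<and> length Vs \<le> length Us \<and> Span K Vs = Span K Us"
  using assms(2)
proof (induction Us)
  case Nil thus ?case by auto
next
  case (Cons u Us)
  then obtain Vs where Vs: "independent K Vs" "length Vs \<le> length Us" "Span K Vs = Span K Us"
    by auto
  show ?case
  proof (cases "u \<in> Span K Us")
    case True
    have Usc: "set Us \<subseteq> carrier R" and uc: "u \<in> carrier R" using Cons.prems by auto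
    have "Span K (u # Us) \<subseteq> Span K Us"
      using mono_Span_subset[OF K, of "u # Us" Us] Span_base_incl[OF K Usc] True Usc uc by auto
    moreover have "Span K Us \<subseteq> Span K (u # Us)"
      using mono_Span[OF K Usc uc] .
    ultimately have "Span K (u # Us) = Span K Us" by (rule subset_antisym)
    thus ?thesis
      using Vs by (intro exI[of _ Vs]) simp
  next
    case False
    hence "Span K (u # Vs) = Span K (u # Us)" and "independent K (u # Vs)"
      using independent.li_Cons[of u K Vs] Cons(2) Vs by auto
    thus ?thesis
      using Vs(2) by (intro exI[of _ "u # Vs"]) simp
  qed
qed

lemma (in field) indep_powers:
  assumes H: "subfield H R" and x: "x \<in> carrier R"
    and M: "M = generate_field R (insert x H)"
    and le: "\<not> finite_dimension H M \<or> r \<le> dim H M"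
  shows "independent H (exp_base x r)"
proof (cases "(transcendental over H) x")
  case True thus ?thesis using transc_exp_base_independent[OF H x] by blast
next
  case False
  have Hc: "H \<subseteq> carrier R" using subfieldE(3)[OF H] .
  have ic: "insert x H \<subseteq> carrier R" using Hc x by auto
  have Msub: "subfield M R" using generate_field_is_subfield[OF ic] M by simp
  have HM: "insert x H \<subseteq> M" using M generate_field.incl[of _ "insert x H" R] by blast
  have "simple_extension H x \<subseteq> M"
    using simple_extension_subring_incl[OF subfieldE(1)[OF Msub]] HM by auto
  moreover have "M \<subseteq> simple_extension H x"
    using M generate_field_min_subfield1[OF ic] simple_extension_is_subfield[OF H x] False
      simple_extension_incl[OF Hc x] simple_extension_mem[OF subfieldE(1)[OF H] x]
    by (simp add: over_def)
  ultimately have MS: "M = simple_extension H x" by blast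
  have fd: "finite_dimension H M"
    using MS finite_dimension_simple_extension[OF H x] False by (simp add: over_def)
  define d where "d = degree (Irr H x)"
  have rd: "r \<le> d"
    using le fd MS simple_extension_dim[OF H x] False unfolding d_def by (simp add: over_def)
  have ind: "independent H (exp_base x d)"
    using exp_base_independent[OF H x] False unfolding d_def by (simp add: over_def)
  have "exp_base x d = take (d - r) (exp_base x d) @ exp_base x r"
    using drop_exp_base[of "d - r" x d] rd by (metis append_take_drop_id diff_diff_cancel)
  thus ?thesis using independent_split(1)[OF H] ind by metis
qed

theorem lemma4p1:
  fixes L :: "('a, 'b) ring_scheme" and H :: "'a set" and \<alpha> :: 'a and M :: "'a set"
    and r s :: nat
  assumes "field L" and "subfield H L" and "\<alpha> \<in> carrier L"
    and "M = generate_field L (insert \<alpha> H)"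
    and "0 < r" and "0 < s" and "le_hdim L H r M" and "le_hdim L H s M"
  shows "mu L H M r s \<le> r + s - 1"
proof -
  interpret L: field L by fact
  note H = assms(2) and x = assms(3)
  have Hc: "H \<subseteq> carrier L" using subfieldE(3)[OF H] .
  have ic: "insert \<alpha> H \<subseteq> carrier L" using Hc x by auto
  have Msub: "subfield M L" using L.generate_field_is_subfield[OF ic] assms(4) by simp
  have HM: "insert \<alpha> H \<subseteq> M" using assms(4) generate_field.incl[of _ "insert \<alpha> H" L] by blast
  have Malg: "subalgebra H M L" using L.subfield_subalgebra[OF H Msub] HM by auto
  have expM: "set (L.exp_base \<alpha> n) \<subseteq> M" for n
    using L.pow_in_subring[OF subfieldE(1)[OF Msub]] HM unfolding L.exp_base_def by auto
  have expC: "set (L.exp_base \<alpha> n) \<subseteq> carrier L" for n using L.exp_base_closed[OF x] .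
  define A where "A = L.Span H (L.exp_base \<alpha> r)"
  define B where "B = L.Span H (L.exp_base \<alpha> s)"
  define C where "C = L.Span H (L.exp_base \<alpha> (r + s - 1))"
  have hs: "hsubspace_dim L H M n (L.Span H (L.exp_base \<alpha> n))" if "le_hdim L H n M" for n
  proof -
    have "L.independent H (L.exp_base \<alpha> n)"
      using L.indep_powers[OF H x assms(4)] that unfolding le_hdim_def by blast
    from L.dimension_independent[OF this] have "L.dimension n H (L.Span H (L.exp_base \<alpha> n))"
      by (simp add: L.exp_base_def)
    thus ?thesis unfolding hsubspace_dim_def
      using L.Span_is_subalgebra[OF H expC] L.subalgebra_Span_incl[OF H Malg expM] by blast
  qed
  have hA: "hsubspace_dim L H M r A" using hs assms(7) A_def by simp
  have hB: "hsubspace_dim L H M s B" using hs assms(8) B_def by simp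
  have AB: "A <#>\<^bsub>L\<^esub> B \<subseteq> C"
  proof
    fix u assume "u \<in> A <#>\<^bsub>L\<^esub> B"
    then obtain a b where "a \<in> A" "b \<in> B" "u = a \<otimes>\<^bsub>L\<^esub> b" unfolding set_mult_def by blast
    thus "u \<in> C" unfolding A_def B_def C_def
      using L.Span_exp_base_mult[OF H x assms(5,6)] by simp
  qed
  have CAB: "set (L.exp_base \<alpha> (r + s - 1)) \<subseteq> A <#>\<^bsub>L\<^esub> B"
  proof
    fix u assume "u \<in> set (L.exp_base \<alpha> (r + s - 1))"
    then obtain k where k: "k < r + s - 1" "u = \<alpha> [^]\<^bsub>L\<^esub> k" unfolding L.exp_base_def by auto
    define i where "i = min k (r - 1)"
    define j where "j = k - i"
    have ij: "i < r" "j < s" "i + j = k" using k(1) assms(5,6) unfolding i_def j_def by auto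
    have "\<alpha> [^]\<^bsub>L\<^esub> i \<in> set (L.exp_base \<alpha> r)"
      using ij(1) unfolding L.exp_base_def by auto
    hence "\<alpha> [^]\<^bsub>L\<^esub> i \<in> A"
      using L.Span_base_incl[OF H expC] unfolding A_def by blast
    moreover have "\<alpha> [^]\<^bsub>L\<^esub> j \<in> set (L.exp_base \<alpha> s)"
      using ij(2) unfolding L.exp_base_def by auto
    hence "\<alpha> [^]\<^bsub>L\<^esub> j \<in> B"
      using L.Span_base_incl[OF H expC] unfolding B_def by blast
    moreover have "u = \<alpha> [^]\<^bsub>L\<^esub> i \<otimes>\<^bsub>L\<^esub> \<alpha> [^]\<^bsub>L\<^esub> j"
      using k(2) ij(3) L.nat_pow_mult[OF x] by simp
    ultimately show "u \<in> A <#>\<^bsub>L\<^esub> B" unfolding set_mult_def by blast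
  qed
  have hsp: "hspan L H (A <#>\<^bsub>L\<^esub> B) = C"
  proof -
    have "subalgebra H C L" using L.Span_is_subalgebra[OF H expC] C_def by simp
    moreover have "C \<subseteq> V" if "subalgebra H V L" "A <#>\<^bsub>L\<^esub> B \<subseteq> V" for V
      using L.subalgebra_Span_incl[OF H that(1)] CAB that(2) C_def by blast
    ultimately show ?thesis unfolding hspan_def using AB by blast
  qed
  obtain Vs where Vs: "L.independent H Vs" "length Vs \<le> length (L.exp_base \<alpha> (r + s - 1))"
      "L.Span H Vs = C"
    using L.filter_base_len[OF H expC] C_def by blast
  have "L.dim H C = length Vs"
    using L.dimI[OF H L.dimension_independent[OF Vs(1)]] Vs(3) by (simp add: over_def)
  hence dimC: "L.dim H C \<le> r + s - 1" using Vs(2) by (simp add: L.exp_base_def)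
  have mem: "L.dim H C \<in> {ring.dim L H (hspan L H (A <#>\<^bsub>L\<^esub> B)) | A B.
      hsubspace_dim L H M r A \<and> hsubspace_dim L H M s B}"
  proof -
    have "L.dim H C = L.dim H (hspan L H (A <#>\<^bsub>L\<^esub> B))" using hsp by simp
    thus ?thesis using hA hB by blast
  qed
  have "mu L H M r s \<le> L.dim H C"
    unfolding mu_def by (rule cInf_lower[OF mem]) simp
  thus ?thesis using dimC by simp
qed

end
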